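(* Let $n\ge 2$ and let $S=\{s_1<\dots<s_{k_1}\}$ and $T=\{t_1<\dots<t_{k_2}\}$ be nonempty subsets of $\{1,\dots,n-1\}$ with $\max S+\min T\le n$ and $\min S+\max T\le n$. Let $D$ be the digraph of the Boolean Toeplitz matrix $T_n\langle S;T\rangle$, let $d=\gcd\{s+t : s\in S,\ t\in T\}$ and $d'=\gcd(d,s_1)$. Then (a) the matrix period of $D$ is $d/d'$; (b) the competition period of $D$ is $1$; (c) there is $M$ such that for every $m\ge M$, the $m$-step competition graph $C^m(D)$ is the disjoint union of the cliques $\{v\in[n] : v\equiv i \pmod d\}$, $1\le i\le d$ (i.e. the limit of $\{C^m(D)\}_{m\ge1}$ is this disjoint union of cliques).
   Context: Boolean arithmetic on $\{0,1\}$: $1+1=1$, usual multiplication. For nonempty $S,T\subseteq\{1,\dots,n-1\}$, $T_n\langle S;T\rangle$ is the $n\times n$ $(0,1)$-matrix whose $(i,j)$-entry is $1$ iff $j-i\in S$ or $i-j\in T$. Its digraph $D$ has vertex set $[n]=\{1,\dots,n\}$ and an arc $(i,j)$ iff the $(i,j)$-entry is $1$. The matrix period of $D$ (of its adjacency matrix $A$) is the smallest $p\ge1$ such that $A^m=A^{m+p}$ for all sufficiently large $m$ (Boolean powers). The $m$-step competition graph $C^m(D)$ is the graph on $[n]$ in which distinct $u,v$ are adjacent iff some vertex $w$ is reachable from both $u$ and $v$ by directed walks of length exactly $m$; equivalently the off-diagonal $(u,v)$-entry of $A^m(A^T)^m$ is $1$. The competition index $q$ and competition period $p$ of $A$: $q$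 is the smallest positive integer such that $A^{q+i}(A^T)^{q+i}=A^{q+r+i}(A^T)^{q+r+i}$ for some $r\ge1$ and all $i\ge0$, and $p$ is the smallest positive integer with $A^q(A^T)^q=A^{q+p}(A^T)^{q+p}$. *)

theory Defs
  imports Main
begin

text \<open>Boolean (0,1)-matrices of order n are represented as predicates
  nat \<Rightarrow> nat \<Rightarrow> bool on the index set {1..n}; entries outside {1..n} are False.\<close>

definition toeplitz :: "nat \<Rightarrow> nat set \<Rightarrow> nat set \<Rightarrow> nat \<Rightarrow> nat \<Rightarrow> bool" where
  "toeplitz n S T i j \<longleftrightarrow> i \<in> {1..n} \<and> j \<in> {1..n} \<and>
     ((i < j \<and> j - i \<in> S) \<or> (j < i \<and> i - j \<in> T))"

definition bmult :: "nat \<Rightarrow> (nat \<Rightarrow> nat \<Rightarrow> bool) \<Rightarrow> (nat \<Rightarrow> nat \<Rightarrow> bool) \<Rightarrow> nat \<Rightarrow> nat \<Rightarrow> bool" where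
  "bmult n A B i j \<longleftrightarrow> (\<exists>k\<in>{1..n}. A i k \<and> B k j)"

definition btrans :: "(nat \<Rightarrow> nat \<Rightarrow> bool) \<Rightarrow> nat \<Rightarrow> nat \<Rightarrow> bool" where
  "btrans A i j \<longleftrightarrow> A j i"

primrec bpow :: "nat \<Rightarrow> (nat \<Rightarrow> nat \<Rightarrow> bool) \<Rightarrow> nat \<Rightarrow> nat \<Rightarrow> nat \<Rightarrow> bool" where
  "bpow n A 0 = (\<lambda>i j. i \<in> {1..n} \<and> i = j)"
| "bpow n A (Suc m) = bmult n (bpow n A m) A"

definition matrix_period :: "nat \<Rightarrow> (nat \<Rightarrow> nat \<Rightarrow> bool) \<Rightarrow> nat" where
  "matrix_period n A = (LEAST p. p \<ge> 1 \<and> (\<exists>M. \<forall>m\<ge>M. bpow n A m = bpow n A (m + p)))"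

definition comp_mat :: "nat \<Rightarrow> (nat \<Rightarrow> nat \<Rightarrow> bool) \<Rightarrow> nat \<Rightarrow> nat \<Rightarrow> nat \<Rightarrow> bool" where
  "comp_mat n A m = bmult n (bpow n A m) (bpow n (btrans A) m)"

definition competition_index :: "nat \<Rightarrow> (nat \<Rightarrow> nat \<Rightarrow> bool) \<Rightarrow> nat" where
  "competition_index n A = (LEAST q. q \<ge> 1 \<and>
     (\<exists>r\<ge>1. \<forall>i. comp_mat n A (q + i) = comp_mat n A (q + r + i)))"

definition competition_period :: "nat \<Rightarrow> (nat \<Rightarrow> nat \<Rightarrow> bool) \<Rightarrow> nat" where
  "competition_period n A = (let q = competition_index n A in
     (LEAST p. p \<ge> 1 \<and> comp_mat n A q = comp_mat n A (q + p)))"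

definition mstep_comp_graph :: "nat \<Rightarrow> (nat \<Rightarrow> nat \<Rightarrow> bool) \<Rightarrow> nat \<Rightarrow> nat \<Rightarrow> nat \<Rightarrow> bool" where
  "mstep_comp_graph n A m u v \<longleftrightarrow> u \<in> {1..n} \<and> v \<in> {1..n} \<and> u \<noteq> v \<and>
     (\<exists>w\<in>{1..n}. bpow n A m u w \<and> bpow n A m v w)"

end

theory Submission
  imports Defs
begin


lemma bpow_bound:
  assumes bd: "\<And>i j. A i j \<Longrightarrow> i \<in> {1..n} \<and> j \<in> {1..n}"
  shows "bpow n A m i j \<Longrightarrow> i \<in> {1..n} \<and> j \<in> {1..n}"
proof (induction m arbitrary: j)
  case 0 then show ?case by simp
next
  case (Suc m) then show ?case using bd by (auto simp: bmult_def)
qed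

lemma bpow_add:
  assumes bd: "\<And>i j. A i j \<Longrightarrow> i \<in> {1..n} \<and> j \<in> {1..n}"
  shows "bpow n A (p + q) u w \<longleftrightarrow> (\<exists>v\<in>{1..n}. bpow n A p u v \<and> bpow n A q v w)"
proof (induction q arbitrary: w)
  case 0 then show ?case using bpow_bound[OF bd] by auto
next
  case (Suc q)
  have "bpow n A (p + Suc q) u w \<longleftrightarrow> (\<exists>k\<in>{1..n}. bpow n A (p+q) u k \<and> A k w)"
    by (simp add: bmult_def)
  also have "\<dots> \<longleftrightarrow> (\<exists>v\<in>{1..n}. bpow n A p u v \<and> bpow n A (Suc q) v w)"
    using Suc by (auto simp: bmult_def)
  finally show ?case .
qed

lemma bpow_one:
  assumes bd: "\<And>i j. A i j \<Longrightarrow> i \<in> {1..n} \<and> j \<in> {1..n}"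
  shows "bpow n A 1 i j \<longleftrightarrow> A i j"
  using bd by (auto simp: bmult_def)

lemma btrans_eq: "btrans A = (\<lambda>i j. A j i)"
  by (auto simp: btrans_def fun_eq_iff)

lemma bpow_trans:
  assumes bd: "\<And>i j. A i j \<Longrightarrow> i \<in> {1..n} \<and> j \<in> {1..n}"
  shows "bpow n (btrans A) m i j \<longleftrightarrow> bpow n A m j i"
proof (induction m arbitrary: j)
  case 0 then show ?case by auto
next
  case (Suc m)
  note Suc.IH[unfolded btrans_eq]
  have "bpow n (btrans A) (Suc m) i j \<longleftrightarrow> (\<exists>k\<in>{1..n}. bpow n A m k i \<and> A j k)"
    using Suc.IH by (simp add: bmult_def btrans_eq)
  also have "\<dots> \<longleftrightarrow> bpow n A (1 + m) j i"
    using bpow_add[OF bd, where p=1 and q=m and u=j and w=i] bpow_one[OF bd] by auto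
  finally show ?case by simp
qed

lemma decomp:
  fixes c u :: nat assumes "0 < c" "1 \<le> u" shows "\<exists>x j. 1 \<le> x \<and> x \<le> c \<and> u = x + j*c"
proof -
  have "u - 1 = (u - 1) div c * c + (u - 1) mod c" by simp
  moreover have "(u - 1) mod c < c" using assms by simp
  ultimately show ?thesis using assms
    by (intro exI[of _ "(u - 1) mod c + 1"] exI[of _ "(u - 1) div c"]) linarith
qed

lemma decomp_up:
  fixes c x n :: nat assumes "0 < c" "x \<le> n" shows "\<exists>j. x + j*c \<le> n \<and> n < x + j*c + c"
proof -
  have "n - x = (n - x) div c * c + (n - x) mod c" by simp
  moreover have "(n - x) mod c < c" using assms by simp
  ultimately show ?thesis using assms
    by (intro exI[of _ "(n - x) div c"]) linarith
qed

lemma Gcd_in_group: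
  fixes H :: "int set"
  assumes "0 \<in> H" and add: "\<And>x y. x \<in> H \<Longrightarrow> y \<in> H \<Longrightarrow> x + y \<in> H"
    and mul: "\<And>x z. x \<in> H \<Longrightarrow> z * x \<in> H"
  shows "finite X \<Longrightarrow> (\<forall>x\<in>X. int x \<in> H) \<Longrightarrow> int (Gcd X) \<in> H"
proof (induction X rule: finite_induct)
  case empty then show ?case using assms by simp
next
  case (insert x X)
  obtain u v where "u * int x + v * int (Gcd X) = gcd (int x) (int (Gcd X))"
    using bezout_int by blast
  then have "int (Gcd (insert x X)) = u * int x + v * int (Gcd X)" by simp
  then show ?case using insert add mul by simp
qed



locale toep =
  fixes n :: nat and S T :: "nat set"
  assumes n2: "n \<ge> 2" and Sne: "S \<noteq> {}" and Tne: "T \<noteq> {}"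
    and Ssub: "S \<subseteq> {1..n-1}" and Tsub: "T \<subseteq> {1..n-1}"
    and c1: "Max S + Min T \<le> n" and c2: "Min S + Max T \<le> n"
begin

abbreviation "A \<equiv> toeplitz n S T"
abbreviation "a \<equiv> Min S"
abbreviation "b \<equiv> Min T"
abbreviation "d \<equiv> Gcd {s + t | s t. s \<in> S \<and> t \<in> T}"

lemma finS: "finite S" using Ssub finite_subset by blast
lemma finT: "finite T" using Tsub finite_subset by blast
lemma aS: "a \<in> S" using finS Sne by simp
lemma bT: "b \<in> T" using finT Tne by simp
lemma S1: "s \<in> S \<Longrightarrow> 1 \<le> s \<and> s < n"
proof -
  assume "s \<in> S" then have "s \<in> {1..n-1}" using Ssub by blast
  then show ?thesis using n2 by auto
qed
lemma T1: "t \<in> T \<Longrightarrow> 1 \<le> t \<and> t < n"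
proof -
  assume "t \<in> T" then have "t \<in> {1..n-1}" using Tsub by blast
  then show ?thesis using n2 by auto
qed
lemma a1: "1 \<le> a" using S1 aS by blast
lemma b1: "1 \<le> b" using T1 bT by blast
lemma sb: "s \<in> S \<Longrightarrow> s + b \<le> n" using c1 Max_ge[OF finS, of s] by linarith
lemma at: "t \<in> T \<Longrightarrow> a + t \<le> n" using c2 Max_ge[OF finT, of t] by linarith
lemma ab: "a + b \<le> n" using sb aS by blast
lemma amin: "s \<in> S \<Longrightarrow> a \<le> s" using finS by simp

lemma bd: "A i j \<Longrightarrow> i \<in> {1..n} \<and> j \<in> {1..n}" by (simp add: toeplitz_def)

lemma step_fwd: "p \<in> {1..n} \<Longrightarrow> s \<in> S \<Longrightarrow> p + s \<le> n \<Longrightarrow> A p (p + s)"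
  using S1[of s] by (auto simp: toeplitz_def)

lemma step_bwd: "p \<le> n \<Longrightarrow> t \<in> T \<Longrightarrow> t < p \<Longrightarrow> A p (p - t)"
  using T1[of t] by (auto simp: toeplitz_def)

lemma snoc: "bpow n A k x y \<Longrightarrow> A y z \<Longrightarrow> bpow n A (Suc k) x z"
  using bd by (auto simp: bmult_def)

lemma cat: "bpow n A k x y \<Longrightarrow> bpow n A l y z \<Longrightarrow> bpow n A (k + l) x z"
  using bpow_add[of A n k l x z] bd bpow_bound[OF bd] by blast

lemma desc: "t \<in> T \<Longrightarrow> p \<le> n \<Longrightarrow> j * t < p \<Longrightarrow> bpow n A j p (p - j*t)"
proof (induction j)
  case 0 then show ?case by simp
next
  case (Suc j)
  then have "bpow n A j p (p - j*t)" by simp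
  moreover have "A (p - j*t) (p - j*t - t)" using Suc by (intro step_bwd) auto
  ultimately show ?case using snoc by (simp add: diff_diff_add add.commute)
qed

lemma asc: "s \<in> S \<Longrightarrow> 1 \<le> p \<Longrightarrow> p + j*s \<le> n \<Longrightarrow> bpow n A j p (p + j*s)"
proof (induction j)
  case 0 then show ?case using S1[of s] by simp
next
  case (Suc j)
  then have "bpow n A j p (p + j*s)" by simp
  moreover have "A (p + j*s) (p + j*s + s)" using Suc by (intro step_fwd) auto
  ultimately show ?case using snoc by (simp add: add.commute add.left_commute)
qed

lemma rot: "\<forall>p\<in>{1..a+b}. \<exists>q\<in>{1..a+b}. bpow n A k p q \<and> int (a+b) dvd (int q - int p - int k * int a)"
proof (induction k)
  case 0 then show ?case using ab by auto
next
  case (Suc k)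
  show ?case
  proof
    fix p assume p: "p \<in> {1..a+b}"
    then obtain q where q: "q \<in> {1..a+b}" "bpow n A k p q" "int (a+b) dvd (int q - int p - int k * int a)"
      using Suc by blast
    show "\<exists>q\<in>{1..a+b}. bpow n A (Suc k) p q \<and> int (a+b) dvd (int q - int p - int (Suc k) * int a)"
    proof (cases "q \<le> b")
      case True
      have "A q (q + a)" using q True ab aS by (intro step_fwd) auto
      then have "bpow n A (Suc k) p (q + a)" using snoc q by blast
      moreover have "int q - int p - int (Suc k) * int a = int (q + a) - int p - int (Suc k) * int a - int a" by simp
      ultimately show ?thesis using True q a1
        by (intro bexI[of _ "q + a"]) (auto simp: algebra_simps)
    next
      case False
      have "A q (q - b)" using q False ab bT by (intro step_bwd) auto
      then have "bpow n A (Suc k) p (q - b)" using snoc q by blast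
      moreover have eq: "int (q - b) - int p - int (Suc k) * int a = (int q - int p - int k * int a) - int (a+b)"
        using False by (simp add: algebra_simps of_nat_diff)
      have "int (a+b) dvd (int q - int p - int k * int a) - int (a+b)"
        by (rule dvd_diff[OF q(3)]) simp
      then have "int (a+b) dvd int (q - b) - int p - int (Suc k) * int a" unfolding eq .
      ultimately show ?thesis using False q
        by (intro bexI[of _ "q - b"]) auto
    qed
  qed
qed

end

context toep begin

lemma same_home: "x \<in> {1..c} \<Longrightarrow> y \<in> {1..c} \<Longrightarrow> int c dvd (int y - int x) \<Longrightarrow> x = y"
proof (rule ccontr)
  assume h: "x \<in> {1..c}" "y \<in> {1..c}" "int c dvd (int y - int x)" "x \<noteq> y"
  then obtain z where z: "int y - int x = int c * z" by (auto elim: dvdE)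
  have "z \<noteq> 0" using z h(4) by auto
  then have "1 \<le> \<bar>z\<bar>" by linarith
  then have "int c * 1 \<le> int c * \<bar>z\<bar>" by (intro mult_left_mono) auto
  then have "\<bar>int c * z\<bar> \<ge> int c" by (simp add: abs_mult)
  then show False using z h(1,2) by auto
qed

lemma rot_exact:
  assumes "x \<in> {1..a+b}" "y \<in> {1..a+b}" "int (a+b) dvd (int y - int x - int k * int a)"
  shows "bpow n A k x y"
proof -
  obtain q where q: "q \<in> {1..a+b}" "bpow n A k x q" "int (a+b) dvd (int q - int x - int k * int a)"
    using rot assms(1) by blast
  have "int (a+b) dvd (int q - int x - int k * int a) - (int y - int x - int k * int a)"
    using q(3) assms(3) by (rule dvd_diff)
  then have "int (a+b) dvd (int q - int y)" by simp
  then have "y = q" using same_home[OF assms(2) q(1)] by simp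
  then show ?thesis using q by simp
qed

definition H :: "int set" where
  "H = {r. \<forall>x\<in>{1..a+b}. \<exists>p\<in>{1..a+b}. \<exists>l. bpow n A l x p \<and> int (a+b) dvd (int p - int x - int l * int a - r)}"

lemma H0: "0 \<in> H"
  unfolding H_def using ab by (auto intro!: bexI exI[of _ 0])

lemma H_add: assumes "r1 \<in> H" "r2 \<in> H" shows "r1 + r2 \<in> H"
  unfolding H_def
proof
  show "\<forall>x\<in>{1..a+b}. \<exists>p\<in>{1..a+b}. \<exists>l. bpow n A l x p \<and> int (a+b) dvd (int p - int x - int l * int a - (r1 + r2))"
  proof
    fix x assume x: "x \<in> {1..a+b}"
    obtain p1 l1 where p1: "p1 \<in> {1..a+b}" "bpow n A l1 x p1" "int (a+b) dvd (int p1 - int x - int l1 * int a - r1)"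
      using assms(1) x unfolding H_def by blast
    obtain p2 l2 where p2: "p2 \<in> {1..a+b}" "bpow n A l2 p1 p2" "int (a+b) dvd (int p2 - int p1 - int l2 * int a - r2)"
      using assms(2) p1(1) unfolding H_def by blast
    have "bpow n A (l1 + l2) x p2" using cat p1(2) p2(2) by blast
    moreover have "int (a+b) dvd (int p1 - int x - int l1 * int a - r1) + (int p2 - int p1 - int l2 * int a - r2)"
      using p1(3) p2(3) by (rule dvd_add)
    then have "int (a+b) dvd (int p2 - int x - int (l1 + l2) * int a - (r1 + r2))"
      by (simp add: algebra_simps)
    ultimately show "\<exists>p\<in>{1..a+b}. \<exists>l. bpow n A l x p \<and> int (a+b) dvd (int p - int x - int l * int a - (r1 + r2))"
      using p2(1) by blast
  qed
qed

lemma H_shift: assumes "r \<in> H" shows "r + int (a+b) * z \<in> H"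
  unfolding H_def
proof
  show "\<forall>x\<in>{1..a+b}. \<exists>p\<in>{1..a+b}. \<exists>l. bpow n A l x p \<and> int (a+b) dvd (int p - int x - int l * int a - (r + int (a+b) * z))"
  proof
    fix x assume x: "x \<in> {1..a+b}"
    obtain p1 l1 where p1: "p1 \<in> {1..a+b}" "bpow n A l1 x p1" "int (a+b) dvd (int p1 - int x - int l1 * int a - r)"
      using assms(1) x unfolding H_def by blast
    have "int (a+b) dvd (int p1 - int x - int l1 * int a - r) - int (a+b) * z"
      using p1(3) by (rule dvd_diff) simp
    then have "int (a+b) dvd (int p1 - int x - int l1 * int a - (r + int (a+b) * z))"
      by (simp add: algebra_simps)
    then show "\<exists>p\<in>{1..a+b}. \<exists>l. bpow n A l x p \<and> int (a+b) dvd (int p - int x - int l * int a - (r + int (a+b) * z))"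
      using p1 by blast
  qed
qed

lemma H_natmul: "r \<in> H \<Longrightarrow> int k * r \<in> H"
proof (induction k)
  case 0 then show ?case using H0 by simp
next
  case (Suc k) then show ?case using H_add[of "int k * r" r] by (simp add: algebra_simps)
qed

lemma H_neg: assumes "r \<in> H" shows "- r \<in> H"
proof -
  have "int (a + b - 1) * r \<in> H" using H_natmul assms by blast
  then have "int (a + b - 1) * r + int (a+b) * (- r) \<in> H" by (rule H_shift)
  moreover have "int (a + b - 1) * r + int (a+b) * (- r) = - r" using a1 by (simp add: of_nat_diff algebra_simps)
  ultimately show ?thesis by simp
qed

lemma H_mul: assumes "r \<in> H" shows "z * r \<in> H"
proof (cases "z \<ge> 0")
  case True
  then have "z = int (nat z)" by simp
  then show ?thesis using H_natmul[OF assms, of "nat z"] by metis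
next
  case False
  then have "z * r = - (int (nat (-z)) * r)" by simp
  then show ?thesis using H_neg[OF H_natmul[OF assms, of "nat (-z)"]] by simp
qed

end

context toep begin

lemma H_s: assumes s: "s \<in> S" shows "int s - int a \<in> H"
  unfolding H_def
proof (intro CollectI ballI)
  fix x assume x: "x \<in> {1..a+b}"
  obtain p1 j1 where p1: "1 \<le> p1" "p1 \<le> b" "x = p1 + j1*b" using decomp[of b x] b1 x by auto
  have w1: "bpow n A j1 x p1" using desc[OF bT, of x j1] p1 x ab by simp
  have st: "A p1 (p1 + s)" using step_fwd[OF _ s] p1 sb[OF s] ab by auto
  obtain p' j2 where p': "1 \<le> p'" "p' \<le> b" "p1 + s = p' + j2*b" using decomp[of b "p1 + s"] b1 p1 by auto
  have w2: "bpow n A j2 (p1 + s) p'" using desc[OF bT, of "p1 + s" j2] p' p1 sb[OF s] by simp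
  have w: "bpow n A (Suc j1 + j2) x p'" using cat[OF snoc[OF w1 st] w2] .
  have e1: "int x = int p1 + int j1 * int b" using p1 by simp
  have e2: "int p' = int p1 + int s - int j2 * int b"
  proof -
    have "int (p1 + s) = int (p' + j2*b)" using p'(3) by (simp only:)
    then show ?thesis unfolding of_nat_add of_nat_mult by linarith
  qed
  have "int p' - int x - int (Suc j1 + j2) * int a - (int s - int a) = int (a+b) * (-(int j1 + int j2))"
    by (simp add: e1 e2 algebra_simps)
  then have dv: "int (a+b) dvd int p' - int x - int (Suc j1 + j2) * int a - (int s - int a)" by simp
  show "\<exists>p\<in>{1..a+b}. \<exists>l. bpow n A l x p \<and> int (a+b) dvd (int p - int x - int l * int a - (int s - int a))"
    apply (rule bexI[of _ p'])
     apply (rule exI[of _ "Suc j1 + j2"])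
    using w dv apply blast
    using p' by simp
qed

lemma H_t: assumes t: "t \<in> T" shows "int b - int t \<in> H"
  unfolding H_def
proof (intro CollectI ballI)
  fix x assume x: "x \<in> {1..a+b}"
  obtain j1 where j1: "x + j1*a \<le> n" "n < x + j1*a + a" using decomp_up[of a x n] a1 x ab by auto
  have w1: "bpow n A j1 x (x + j1*a)" using asc[OF aS, of x j1] j1 x by simp
  have st: "A (x + j1*a) (x + j1*a - t)" using step_bwd[OF j1(1) t] at[OF t] j1 by linarith
  have tlt: "t < x + j1*a" using at[OF t] j1 by linarith
  obtain p' j2 where p': "1 \<le> p'" "p' \<le> b" "x + j1*a - t = p' + j2*b"
  proof -
    have "1 \<le> x + j1*a - t" using tlt by linarith
    moreover have "0 < b" using b1 by linarith
    ultimately show ?thesis using decomp[of b "x + j1*a - t"] that by blast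
  qed
  have w2: "bpow n A j2 (x + j1*a - t) p'" using desc[OF bT, of "x + j1*a - t" j2] p' j1 by simp
  have w: "bpow n A (Suc j1 + j2) x p'" using cat[OF snoc[OF w1 st] w2] .
  have tle: "t \<le> x + j1*a" using at[OF t] j1 by linarith
  have e2: "int p' = int x + int j1 * int a - int t - int j2 * int b"
  proof -
    have "int (x + j1*a - t) = int (p' + j2*b)" using p'(3) by simp
    then have "int (x + j1*a) - int t = int (p' + j2*b)" using tle by (simp only: of_nat_diff)
    then show ?thesis unfolding of_nat_add of_nat_mult by linarith
  qed
  have "int p' - int x - int (Suc j1 + j2) * int a - (int b - int t) = int (a+b) * (-(1 + int j2))"
    by (simp add: e2 algebra_simps)
  then have dv: "int (a+b) dvd int p' - int x - int (Suc j1 + j2) * int a - (int b - int t)" by simp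
  show "\<exists>p\<in>{1..a+b}. \<exists>l. bpow n A l x p \<and> int (a+b) dvd (int p - int x - int l * int a - (int b - int t))"
    apply (rule bexI[of _ p'])
     apply (rule exI[of _ "Suc j1 + j2"])
    using w dv apply blast
    using p' by simp
qed

lemma H_st: "s \<in> S \<Longrightarrow> t \<in> T \<Longrightarrow> int (s + t) \<in> H"
proof -
  assume s: "s \<in> S" and t: "t \<in> T"
  have h1: "(int s - int a) + - (int b - int t) \<in> H" by (rule H_add[OF H_s[OF s] H_neg[OF H_t[OF t]]])
  have "(int s - int a) + - (int b - int t) + int (a+b) * 1 \<in> H" by (rule H_shift[OF h1])
  moreover have "(int s - int a) + - (int b - int t) + int (a+b) * 1 = int (s + t)" by simp
  ultimately show ?thesis by simp
qed

lemma finST: "finite {s + t | s t. s \<in> S \<and> t \<in> T}"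
proof -
  have "{s + t | s t. s \<in> S \<and> t \<in> T} \<subseteq> (\<lambda>(s,t). s + t) ` (S \<times> T)" by auto
  then show ?thesis using finS finT finite_subset by blast
qed

lemma H_d: "int d \<in> H"
proof (rule Gcd_in_group[OF H0 H_add H_mul finST])
  show "\<forall>x\<in>{s + t |s t. s \<in> S \<and> t \<in> T}. int x \<in> H" using H_st by blast
qed

lemma H_dvd: "int d dvd r \<Longrightarrow> r \<in> H"
proof -
  assume "int d dvd r"
  then obtain k where "r = int d * k" by (auto elim: dvdE)
  then show ?thesis using H_mul[OF H_d, of k] by (simp add: mult.commute)
qed

lemma dvd_st: "s \<in> S \<Longrightarrow> t \<in> T \<Longrightarrow> d dvd s + t"
  by (rule Gcd_dvd) blast

lemma d_ab: "d dvd a + b" using dvd_st aS bT by blast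

lemma d_pos: "0 < d"
proof -
  have "d \<noteq> 0"
  proof
    assume h: "d = 0"
    have "(0::nat) dvd a + b" using d_ab unfolding h .
    then have "a + b = 0" by (simp only: dvd_0_left_iff)
    then show False using a1 by simp
  qed
  then show ?thesis by (simp only: neq0_conv)
qed

lemma d_le: "d \<le> n" using d_ab a1 ab dvd_imp_le[of d "a+b"] by linarith

lemma int_dvd_st: "s \<in> S \<Longrightarrow> t \<in> T \<Longrightarrow> int d dvd int s + int t"
proof -
  assume "s \<in> S" "t \<in> T"
  then have "int d dvd int (s + t)" using dvd_st by (simp only: of_nat_dvd_iff)
  then show ?thesis by simp
qed

lemma nec: "bpow n A m u v \<Longrightarrow> int d dvd (int v - int u - int m * int a)"
proof (induction m arbitrary: v)
  case 0 then show ?case by simp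
next
  case (Suc m)
  then obtain k where k: "bpow n A m u k" "A k v" by (auto simp: bmult_def)
  have IH: "int d dvd (int k - int u - int m * int a)" using Suc.IH k(1) .
  from k(2) consider "k < v" "v - k \<in> S" | "v < k" "k - v \<in> T" by (auto simp: toeplitz_def)
  then show ?case
  proof cases
    case 1
    define s where "s = v - k"
    have sS: "s \<in> S" using 1 s_def by simp
    have "int d dvd (int s + int b) - (int a + int b)" by (rule dvd_diff[OF int_dvd_st[OF sS bT] int_dvd_st[OF aS bT]])
    then have "int d dvd (int k - int u - int m * int a) + ((int s + int b) - (int a + int b))"
      using IH by (rule dvd_add[rotated])
    moreover have "int v = int k + int s" using 1 s_def by simp
    ultimately show ?thesis by (simp add: algebra_simps)
  next
    case 2
    define t where "t = k - v"
    have tT: "t \<in> T" using 2 t_def by simp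
    have "int d dvd (int k - int u - int m * int a) - (int a + int t)" by (rule dvd_diff[OF IH int_dvd_st[OF aS tT]])
    moreover have "int k = int v + int t" using 2 t_def by simp
    ultimately show ?thesis by (simp add: algebra_simps)
  qed
qed

end


lemma period_nt:
  fixes d a p :: nat assumes "0 < d"
  shows "d dvd p * a \<longleftrightarrow> (d div gcd d a) dvd p"
proof -
  define g where "g = gcd d a"
  define d1 where "d1 = d div g"
  define a1 where "a1 = a div g"
  have g0: "g \<noteq> 0" using assms g_def by simp
  have dd: "d = g * d1" unfolding d1_def g_def by simp
  have aa: "a = g * a1" unfolding a1_def g_def by simp
  have cop: "coprime d1 a1" unfolding d1_def a1_def g_def using assms div_gcd_coprime by blast
  have "d dvd p * a \<longleftrightarrow> g * d1 dvd g * (a1 * p)" by (simp add: dd aa ac_simps)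
  also have "\<dots> \<longleftrightarrow> d1 dvd a1 * p" using g0 by simp
  also have "\<dots> \<longleftrightarrow> d1 dvd p" using cop by (rule coprime_dvd_mult_right_iff)
  finally show ?thesis unfolding d1_def g_def .
qed

context toep begin

lemma int_d_ab: "int d dvd int (a+b)" using d_ab by (simp only: of_nat_dvd_iff)

lemma suff_home:
  assumes x: "x \<in> {1..a+b}" and y: "y \<in> {1..a+b}"
  shows "eventually (\<lambda>m. int d dvd (int y - int x - int m * int a) \<longrightarrow> bpow n A m x y) sequentially"
proof -
  let ?N = "int (a+b)"
  have Npos: "?N > 0" using a1 by simp
  have each: "\<forall>r\<in>{0..<?N}. eventually (\<lambda>m. int d dvd r \<and> (int y - int x - int m * int a) mod ?N = r \<longrightarrow> bpow n A m x y) sequentially"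
  proof
    fix r assume r: "r \<in> {0..<?N}"
    show "eventually (\<lambda>m. int d dvd r \<and> (int y - int x - int m * int a) mod ?N = r \<longrightarrow> bpow n A m x y) sequentially"
    proof (cases "int d dvd r")
      case False then show ?thesis by simp
    next
      case True
      then have "r \<in> H" by (rule H_dvd)
      then obtain p l where p: "p \<in> {1..a+b}" "bpow n A l x p" "?N dvd (int p - int x - int l * int a - r)"
        using x unfolding H_def by blast
      show ?thesis unfolding eventually_sequentially
      proof (intro exI[of _ l] allI impI)
        fix m assume ml: "l \<le> m" and h: "int d dvd r \<and> (int y - int x - int m * int a) mod ?N = r"
        have "(int y - int x - int m * int a) mod ?N = r mod ?N" using h r by simp
        then have d1: "?N dvd (int y - int x - int m * int a) - r" by (simp only: mod_eq_dvd_iff)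
        have "?N dvd ((int y - int x - int m * int a) - r) - (int p - int x - int l * int a - r)"
          using d1 p(3) by (rule dvd_diff)
        moreover have "((int y - int x - int m * int a) - r) - (int p - int x - int l * int a - r) = int y - int p - int (m - l) * int a"
          using ml by (simp add: of_nat_diff algebra_simps)
        ultimately have "bpow n A (m - l) p y" using rot_exact[OF p(1) y] by simp
        then have "bpow n A (l + (m - l)) x y" using cat p(2) by blast
        then show "bpow n A m x y" using ml by simp
      qed
    qed
  qed
  have "finite {0..<?N}" by simp
  from eventually_ball_finite[OF this each]
  show ?thesis
  proof (rule eventually_mono)
    fix m assume all: "\<forall>r\<in>{0..<?N}. int d dvd r \<and> (int y - int x - int m * int a) mod ?N = r \<longrightarrow> bpow n A m x y"
    show "int d dvd (int y - int x - int m * int a) \<longrightarrow> bpow n A m x y"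
    proof
      assume dz: "int d dvd (int y - int x - int m * int a)"
      let ?r = "(int y - int x - int m * int a) mod ?N"
      have "?r \<in> {0..<?N}" using Npos by simp
      moreover have "int d dvd ?r" using dz int_d_ab by (rule dvd_mod)
      ultimately show "bpow n A m x y" using all by blast
    qed
  qed
qed

lemma suff: "\<exists>M. \<forall>m\<ge>M. \<forall>u\<in>{1..n}. \<forall>v\<in>{1..n}. int d dvd (int v - int u - int m * int a) \<longrightarrow> bpow n A m u v"
proof -
  have "\<forall>u\<in>{1..n}. \<forall>v\<in>{1..n}. eventually (\<lambda>m. int d dvd (int v - int u - int m * int a) \<longrightarrow> bpow n A m u v) sequentially"
  proof (intro ballI)
    fix u v assume u: "u \<in> {1..n}" and v: "v \<in> {1..n}"
    obtain x j1 where x: "1 \<le> x" "x \<le> b" "u = x + j1*b" using decomp[of b u] b1 u by auto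
    obtain y j2 where y: "1 \<le> y" "y \<le> a" "v = y + j2*a" using decomp[of a v] a1 v by auto
    have w1: "bpow n A j1 u x" using desc[OF bT, of u j1] x u by simp
    have w2: "bpow n A j2 y v" using asc[OF aS, of y j2] y v by simp
    have xh: "x \<in> {1..a+b}" using x by simp
    have yh: "y \<in> {1..a+b}" using y by simp
    obtain M0 where M0: "\<forall>m\<ge>M0. int d dvd (int y - int x - int m * int a) \<longrightarrow> bpow n A m x y"
      using suff_home[OF xh yh] unfolding eventually_sequentially by blast
    show "eventually (\<lambda>m. int d dvd (int v - int u - int m * int a) \<longrightarrow> bpow n A m u v) sequentially"
      unfolding eventually_sequentially
    proof (intro exI[of _ "M0 + j1 + j2"] allI impI)
      fix m assume m: "M0 + j1 + j2 \<le> m" and dv: "int d dvd (int v - int u - int m * int a)"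
      define m' where "m' = m - j1 - j2"
      have m'ge: "M0 \<le> m'" using m m'_def by simp
      have e1: "int m' = int m - int j1 - int j2" using m unfolding m'_def by (simp add: of_nat_diff)
      have e2: "int u = int x + int j1 * int b" using x(3) by simp
      have e3: "int v = int y + int j2 * int a" using y(3) by simp
      have eq: "int y - int x - int m' * int a = (int v - int u - int m * int a) + int j1 * int (a+b)"
        by (simp add: e1 e2 e3 algebra_simps)
      have "int d dvd (int v - int u - int m * int a) + int j1 * int (a+b)"
        using dv int_d_ab by (intro dvd_add dvd_mult)
      then have "bpow n A m' x y" using M0 m'ge eq by simp
      then have "bpow n A (j1 + m' + j2) u v" using cat w1 w2 by blast
      moreover have "j1 + m' + j2 = m" using m m'_def by simp
      ultimately show "bpow n A m u v" by simp
    qed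
  qed
  then have "eventually (\<lambda>m. \<forall>u\<in>{1..n}. \<forall>v\<in>{1..n}. int d dvd (int v - int u - int m * int a) \<longrightarrow> bpow n A m u v) sequentially"
    by (simp add: eventually_ball_finite_distrib)
  then show ?thesis unfolding eventually_sequentially by blast
qed

lemma char: "\<exists>M. \<forall>m\<ge>M. \<forall>u v. bpow n A m u v \<longleftrightarrow> (u \<in> {1..n} \<and> v \<in> {1..n} \<and> int d dvd (int v - int u - int m * int a))"
proof -
  obtain M where M: "\<forall>m\<ge>M. \<forall>u\<in>{1..n}. \<forall>v\<in>{1..n}. int d dvd (int v - int u - int m * int a) \<longrightarrow> bpow n A m u v"
    using suff by blast
  have "\<forall>m\<ge>M. \<forall>u v. bpow n A m u v \<longleftrightarrow> (u \<in> {1..n} \<and> v \<in> {1..n} \<and> int d dvd (int v - int u - int m * int a))"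
  proof (intro allI impI)
    fix m u v assume "M \<le> m"
    then show "bpow n A m u v \<longleftrightarrow> (u \<in> {1..n} \<and> v \<in> {1..n} \<and> int d dvd (int v - int u - int m * int a))"
      using M nec[of m u v] bpow_bound[OF bd, where m=m and i=u and j=v] by blast
  qed
  then show ?thesis by blast
qed

lemma wit: "\<exists>w\<in>{1..n}. int d dvd (int w - int u - int m * int a)"
proof -
  let ?X = "int u + int m * int a - 1"
  define w where "w = 1 + nat (?X mod int d)"
  have dp: "int d > 0" using d_pos by simp
  have "0 \<le> ?X mod int d" "?X mod int d < int d" using dp by simp_all
  then have w: "int w = 1 + ?X mod int d" "w \<le> d" unfolding w_def by linarith+
  have "int d dvd ?X mod int d - ?X" by (simp add: mod_eq_dvd_iff[symmetric])
  then have "int d dvd (int w - int u - int m * int a)" using w(1) by (simp add: algebra_simps)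
  moreover have "w \<in> {1..n}" using w(2) d_le unfolding w_def by simp
  ultimately show ?thesis by blast
qed

lemma compchar: "\<exists>M. \<forall>m\<ge>M. \<forall>u v. (\<exists>w\<in>{1..n}. bpow n A m u w \<and> bpow n A m v w) \<longleftrightarrow>
   (u \<in> {1..n} \<and> v \<in> {1..n} \<and> int d dvd (int u - int v))"
proof -
  obtain M where M: "\<forall>m\<ge>M. \<forall>u v. bpow n A m u v \<longleftrightarrow> (u \<in> {1..n} \<and> v \<in> {1..n} \<and> int d dvd (int v - int u - int m * int a))"
    using char by blast
  have "\<forall>m\<ge>M. \<forall>u v. (\<exists>w\<in>{1..n}. bpow n A m u w \<and> bpow n A m v w) \<longleftrightarrow>
   (u \<in> {1..n} \<and> v \<in> {1..n} \<and> int d dvd (int u - int v))"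
  proof (intro allI impI iffI)
    fix m u v assume m: "M \<le> m" and "\<exists>w\<in>{1..n}. bpow n A m u w \<and> bpow n A m v w"
    then obtain w where w: "bpow n A m u w" "bpow n A m v w" by blast
    have h1: "u \<in> {1..n}" "v \<in> {1..n}" "int d dvd (int w - int u - int m * int a)" "int d dvd (int w - int v - int m * int a)"
      using w M m by blast+
    have "int d dvd (int w - int v - int m * int a) - (int w - int u - int m * int a)" using h1(4,3) by (rule dvd_diff)
    then show "u \<in> {1..n} \<and> v \<in> {1..n} \<and> int d dvd (int u - int v)" using h1 by simp
  next
    fix m u v assume m: "M \<le> m" and h: "u \<in> {1..n} \<and> v \<in> {1..n} \<and> int d dvd (int u - int v)"
    obtain w where w: "w \<in> {1..n}" "int d dvd (int w - int u - int m * int a)" using wit by blast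
    have "int d dvd (int w - int u - int m * int a) + (int u - int v)" using w(2) h by (intro dvd_add) auto
    moreover have "(int w - int u - int m * int a) + (int u - int v) = int w - int v - int m * int a" by simp
    ultimately have "int d dvd (int w - int v - int m * int a)" by simp
    then have "bpow n A m u w" "bpow n A m v w" using M m h w by blast+
    then show "\<exists>w\<in>{1..n}. bpow n A m u w \<and> bpow n A m v w" using w by blast
  qed
  then show ?thesis by blast
qed

end


context toep begin

lemma modconv: "u mod d = v mod d \<longleftrightarrow> int d dvd (int u - int v)"
proof -
  have "u mod d = v mod d \<longleftrightarrow> int (u mod d) = int (v mod d)" by (simp only: of_nat_eq_iff)
  also have "\<dots> \<longleftrightarrow> int u mod int d = int v mod int d" by (simp only: zmod_int)
  also have "\<dots> \<longleftrightarrow> int d dvd (int u - int v)" by (rule mod_eq_dvd_iff)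
  finally show ?thesis .
qed

lemma mp: "matrix_period n A = d div gcd d a"
proof -
  obtain M where M: "\<forall>m\<ge>M. \<forall>u v. bpow n A m u v \<longleftrightarrow> (u \<in> {1..n} \<and> v \<in> {1..n} \<and> int d dvd (int v - int u - int m * int a))"
    using char by blast
  have dp: "int d > 0" using d_pos by simp
  have key: "(p \<ge> 1 \<and> (\<exists>M'. \<forall>m\<ge>M'. bpow n A m = bpow n A (m + p))) \<longleftrightarrow> (p \<ge> 1 \<and> (d div gcd d a) dvd p)" for p
  proof
    assume h: "p \<ge> 1 \<and> (\<exists>M'. \<forall>m\<ge>M'. bpow n A m = bpow n A (m + p))"
    then obtain M' where M': "\<forall>m\<ge>M'. bpow n A m = bpow n A (m + p)" by blast
    define m where "m = M + M'"
    define v where "v = 1 + nat ((int m * int a) mod int d)"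
    have "0 \<le> (int m * int a) mod int d" "(int m * int a) mod int d < int d" using dp by simp_all
    then have v: "int v = 1 + (int m * int a) mod int d" "v \<le> d" unfolding v_def by linarith+
    have vn: "v \<in> {1..n}" using v(2) d_le unfolding v_def by simp
    have one: "(1::nat) \<in> {1..n}" using n2 by simp
    have "int d dvd (int m * int a) mod int d - int m * int a" by (simp add: mod_eq_dvd_iff[symmetric])
    then have "int d dvd int v - int 1 - int m * int a" using v(1) by simp
    then have b1: "bpow n A m 1 v" using M vn one unfolding m_def by simp
    have "M' \<le> m" unfolding m_def by simp
    then have "bpow n A m = bpow n A (m + p)" using M' by blast
    then have "bpow n A m 1 v = bpow n A (m + p) 1 v" by (rule fun_cong[OF fun_cong])
    then have "bpow n A (m + p) 1 v" using b1 by (simp only:)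
    then have "int d dvd int v - int 1 - int (m + p) * int a" using M unfolding m_def by simp
    then have "int d dvd (int v - int 1 - int m * int a) - (int v - int 1 - int (m + p) * int a)"
      by (rule dvd_diff[OF \<open>int d dvd int v - int 1 - int m * int a\<close>])
    then have "int d dvd int (p * a)" by (simp add: algebra_simps)
    then have "d dvd p * a" by (simp only: of_nat_dvd_iff)
    then show "p \<ge> 1 \<and> (d div gcd d a) dvd p" using period_nt[OF d_pos] h by blast
  next
    assume h: "p \<ge> 1 \<and> (d div gcd d a) dvd p"
    then have "d dvd p * a" using period_nt[OF d_pos] by blast
    then have "int d dvd int (p * a)" by (simp only: of_nat_dvd_iff)
    then have pa: "int d dvd int p * int a" by simp
    have "\<forall>m\<ge>M. bpow n A m = bpow n A (m + p)"
    proof (intro allI impI ext)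
      fix m u v assume m: "M \<le> m"
      have eq: "int v - int u - int (m + p) * int a = (int v - int u - int m * int a) - int p * int a"
        by (simp add: algebra_simps)
      have "int d dvd (int v - int u - int m * int a) \<longleftrightarrow> int d dvd (int v - int u - int (m + p) * int a)"
        unfolding eq
      proof
        assume "int d dvd int v - int u - int m * int a"
        then show "int d dvd int v - int u - int m * int a - int p * int a" using pa by (rule dvd_diff)
      next
        assume "int d dvd int v - int u - int m * int a - int p * int a"
        then have "int d dvd (int v - int u - int m * int a - int p * int a) + int p * int a" using pa by (rule dvd_add)
        then show "int d dvd int v - int u - int m * int a" by simp
      qed
      then show "bpow n A m u v = bpow n A (m + p) u v" using M m by simp
    qed
    then show "p \<ge> 1 \<and> (\<exists>M'. \<forall>m\<ge>M'. bpow n A m = bpow n A (m + p))" using h by blast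
  qed
  have g: "gcd d a \<le> d" by (rule dvd_imp_le[OF gcd_dvd1 d_pos])
  have gp: "0 < gcd d a" using a1 gcd_pos_nat[of d a] by linarith
  have d1: "0 < d div gcd d a" using g gp by (simp add: div_greater_zero_iff)
  show ?thesis unfolding matrix_period_def
  proof (rule Least_equality)
    show "1 \<le> d div gcd d a \<and> (\<exists>M. \<forall>m\<ge>M. bpow n A m = bpow n A (m + d div gcd d a))"
      using key[of "d div gcd d a"] d1 by simp
  next
    fix y assume "1 \<le> y \<and> (\<exists>M. \<forall>m\<ge>M. bpow n A m = bpow n A (m + y))"
    then have "1 \<le> y" "d div gcd d a dvd y" using key[of y] by blast+
    then show "d div gcd d a \<le> y" by (simp add: dvd_imp_le)
  qed
qed

lemma cp: "competition_period n A = 1"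
proof -
  obtain M where M: "\<forall>m\<ge>M. \<forall>u v. (\<exists>w\<in>{1..n}. bpow n A m u w \<and> bpow n A m v w) \<longleftrightarrow>
   (u \<in> {1..n} \<and> v \<in> {1..n} \<and> int d dvd (int u - int v))" using compchar by blast
  define C where "C = (\<lambda>u v. u \<in> {1..n} \<and> v \<in> {1..n} \<and> int d dvd (int u - int v))"
  have cm: "comp_mat n A m = C" if "M \<le> m" for m
  proof (intro ext)
    fix u v
    have "comp_mat n A m u v \<longleftrightarrow> (\<exists>w\<in>{1..n}. bpow n A m u w \<and> bpow n A m v w)"
      unfolding comp_mat_def bmult_def using bpow_trans[OF bd] by simp
    then show "comp_mat n A m u v = C u v" using M that unfolding C_def by simp
  qed
  let ?Q = "\<lambda>q. q \<ge> 1 \<and> (\<exists>r\<ge>1. \<forall>i. comp_mat n A (q + i) = comp_mat n A (q + r + i))"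
  have "?Q (M + 1)" using cm by (intro conjI exI[of _ 1]) auto
  then have "?Q (competition_index n A)" unfolding competition_index_def by (rule LeastI)
  then obtain r where r: "r \<ge> 1" "\<forall>i. comp_mat n A (competition_index n A + i) = comp_mat n A (competition_index n A + r + i)"
    by blast
  define q where "q = competition_index n A"
  have it: "comp_mat n A (q + i) = comp_mat n A (q + k * r + i)" for k i
  proof (induction k arbitrary: i)
    case 0 then show ?case by simp
  next
    case (Suc k)
    have "comp_mat n A (q + Suc k * r + i) = comp_mat n A (q + r + (k * r + i))" by (simp add: algebra_simps)
    also have "\<dots> = comp_mat n A (q + (k * r + i))" using r(2) unfolding q_def by simp
    also have "\<dots> = comp_mat n A (q + i)" using Suc by (simp add: add.assoc)
    finally show ?case by simp
  qed
  have "M * 1 \<le> M * r" using r(1) by (rule mult_le_mono2)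
  then have Mr: "M \<le> q + M * r" by linarith
  have "comp_mat n A q = comp_mat n A (q + M * r + 0)" using it[of 0 M] by simp
  also have "\<dots> = C" using cm Mr by simp
  also have "\<dots> = comp_mat n A (q + M * r + 1)" using cm Mr by simp
  also have "\<dots> = comp_mat n A (q + 1)" using it[of 1 M] by simp
  finally have e: "comp_mat n A q = comp_mat n A (q + 1)" .
  show ?thesis unfolding competition_period_def Let_def q_def[symmetric]
    by (rule Least_equality) (use e in auto)
qed

lemma ms: "\<exists>M. \<forall>m\<ge>M. \<forall>u v. mstep_comp_graph n A m u v \<longleftrightarrow>
           (u \<in> {1..n} \<and> v \<in> {1..n} \<and> u \<noteq> v \<and> u mod d = v mod d)"
proof -
  obtain M where M: "\<forall>m\<ge>M. \<forall>u v. (\<exists>w\<in>{1..n}. bpow n A m u w \<and> bpow n A m v w) \<longleftrightarrow>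
   (u \<in> {1..n} \<and> v \<in> {1..n} \<and> int d dvd (int u - int v))" using compchar by blast
  show ?thesis
  proof (intro exI[of _ M] allI impI)
    fix m u v assume m: "M \<le> m"
    have "(\<exists>w\<in>{1..n}. bpow n A m u w \<and> bpow n A m v w) \<longleftrightarrow>
      (u \<in> {1..n} \<and> v \<in> {1..n} \<and> int d dvd (int u - int v))" using M m by blast
    then show "mstep_comp_graph n A m u v \<longleftrightarrow> (u \<in> {1..n} \<and> v \<in> {1..n} \<and> u \<noteq> v \<and> u mod d = v mod d)"
      unfolding mstep_comp_graph_def modconv by blast
  qed
qed

end

theorem theoremA:
  fixes n :: nat and S T :: "nat set"
  assumes "n \<ge> 2"
    and "S \<noteq> {}" and "T \<noteq> {}"
    and "S \<subseteq> {1..n-1}" and "T \<subseteq> {1..n-1}"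
    and "Max S + Min T \<le> n" and "Min S + Max T \<le> n"
  defines "d \<equiv> Gcd {s + t | s t. s \<in> S \<and> t \<in> T}"
  defines "d' \<equiv> gcd d (Min S)"
  shows "matrix_period n (toeplitz n S T) = d div d' \<and>
         competition_period n (toeplitz n S T) = 1 \<and>
         (\<exists>M. \<forall>m\<ge>M. \<forall>u v. mstep_comp_graph n (toeplitz n S T) m u v \<longleftrightarrow>
           (u \<in> {1..n} \<and> v \<in> {1..n} \<and> u \<noteq> v \<and> u mod d = v mod d))"
proof -
  interpret toep n S T using assms(1-7) by unfold_locales
  show ?thesis unfolding d_def d'_def using mp cp ms by blast
qed

end
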